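(* Let $f_\theta$ be any map that assigns to each integer linear program $\min_{\mathbf{x}}\{\mathbf{c}^\top\mathbf{x}\mid \mathbf{A}\mathbf{x}\le\mathbf{b},\ \mathbf{x}\in\mathbb{Z}^n\}$ (given via its bipartite representation $\mathcal{A}=\begin{bmatrix}\mathbf{A}&\mathbf{b}\\ \mathbf{c}^\top&0\end{bmatrix}\in\mathbb{R}^{(m+1)\times(n+1)}$) a vector $f_\theta(\mathcal{A})\in\mathbb{R}^n$, and which satisfies $f_\theta(\pi^c(\mathcal{A}))=\pi^v(f_\theta(\mathcal{A}))$ for all $\pi\in S_n$ and $f_\theta(\sigma^r(\mathcal{A}))=f_\theta(\mathcal{A})$ for all $\sigma\in S_m$. Then $f_\theta$ cannot always correctly predict an optimal solution of ILP instances with formulation symmetries: there exists an ILP instance possessing a nontrivial formulation symmetry such that $f_\theta(\mathcal{A})$ is not an optimal solution of that instance.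
   Context: $S_n$ is the set of permutations of $\{1,\dots,n\}$. For $\pi\in S_n$: $\pi^v(\mathbf{y})=[y_{\pi(1)},\dots,y_{\pi(n)},y_{n+1},\dots]^\top$ permutes the top-most $n$ entries of a vector; $\pi^r$ permutes the top-most $n$ rows of a matrix as $[\mathbf{X}_{\pi(1),:},\dots,\mathbf{X}_{\pi(n),:},\mathbf{X}_{n+1,:},\dots]^\top$; $\pi^c$ permutes the left-most $n$ columns as $[\mathbf{X}_{:,\pi(1)},\dots,\mathbf{X}_{:,\pi(n)},\mathbf{X}_{:,n+1},\dots]$; analogously for $\sigma\in S_m$. A permutation $\pi\in S_n$ is a formulation symmetry of the ILP if there exists $\sigma\in S_m$ with $\pi^v(\mathbf{c})=\mathbf{c}$, $\sigma^v(\mathbf{b})=\mathbf{b}$, and $A_{\sigma(i),\pi(j)}=A_{i,j}$ for all $i,j$. *)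

theory Defs
  imports "Jordan_Normal_Form.Matrix" "HOL-Combinatorics.Permutations"
begin

definition bip :: "real mat \<Rightarrow> real vec \<Rightarrow> real vec \<Rightarrow> real mat" where
  "bip A b c = mat (dim_row A + 1) (dim_col A + 1)
     (\<lambda>(i,j). if i < dim_row A \<and> j < dim_col A then A $$ (i,j)
             else if i < dim_row A then b $ i
             else if j < dim_col A then c $ j else 0)"

text \<open>pi^c, sigma^r, pi^v (the permutations are of {0..<n} resp. {0..<m}, identity elsewhere).\<close>
definition col_perm :: "(nat \<Rightarrow> nat) \<Rightarrow> real mat \<Rightarrow> real mat" where
  "col_perm \<pi> M = mat (dim_row M) (dim_col M) (\<lambda>(i,j). M $$ (i, \<pi> j))"

definition row_perm :: "(nat \<Rightarrow> nat) \<Rightarrow> real mat \<Rightarrow> real mat" where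
  "row_perm \<sigma> M = mat (dim_row M) (dim_col M) (\<lambda>(i,j). M $$ (\<sigma> i, j))"

definition vec_perm :: "(nat \<Rightarrow> nat) \<Rightarrow> real vec \<Rightarrow> real vec" where
  "vec_perm \<pi> v = vec (dim_vec v) (\<lambda>j. v $ \<pi> j)"

definition ilp_feasible :: "real mat \<Rightarrow> real vec \<Rightarrow> real vec \<Rightarrow> bool" where
  "ilp_feasible A b x \<longleftrightarrow> dim_vec x = dim_col A \<and> (\<forall>j < dim_col A. x $ j \<in> \<int>)
      \<and> (\<forall>i < dim_row A. (A *\<^sub>v x) $ i \<le> b $ i)"

definition ilp_optimal :: "real mat \<Rightarrow> real vec \<Rightarrow> real vec \<Rightarrow> real vec \<Rightarrow> bool" where
  "ilp_optimal A b c x \<longleftrightarrow> ilp_feasible A b x \<and> (\<forall>y. ilp_feasible A b y \<longrightarrow> c \<bullet> x \<le> c \<bullet> y)"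

definition formulation_symmetry :: "real mat \<Rightarrow> real vec \<Rightarrow> real vec \<Rightarrow> (nat \<Rightarrow> nat) \<Rightarrow> bool" where
  "formulation_symmetry A b c \<pi> \<longleftrightarrow> \<pi> permutes {..<dim_col A} \<and>
     (\<exists>\<sigma>. \<sigma> permutes {..<dim_row A} \<and>
        (\<forall>j < dim_col A. c $ (\<pi> j) = c $ j) \<and>
        (\<forall>i < dim_row A. b $ (\<sigma> i) = b $ i) \<and>
        (\<forall>i < dim_row A. \<forall>j < dim_col A. A $$ (\<sigma> i, \<pi> j) = A $$ (i, j)))"

end

theory Submission
  imports Defs
begin

theorem corollary1:
  fixes f :: "real mat \<Rightarrow> real vec"
  assumes dim: "\<And>A b c. dim_vec b = dim_row A \<Longrightarrow> dim_vec c = dim_col A \<Longrightarrow>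
                  dim_vec (f (bip A b c)) = dim_col A"
    and col_equiv: "\<And>A b c \<pi>. dim_vec b = dim_row A \<Longrightarrow> dim_vec c = dim_col A \<Longrightarrow>
                  \<pi> permutes {..<dim_col A} \<Longrightarrow>
                  f (col_perm \<pi> (bip A b c)) = vec_perm \<pi> (f (bip A b c))"
    and row_inv: "\<And>A b c \<sigma>. dim_vec b = dim_row A \<Longrightarrow> dim_vec c = dim_col A \<Longrightarrow>
                  \<sigma> permutes {..<dim_row A} \<Longrightarrow>
                  f (row_perm \<sigma> (bip A b c)) = f (bip A b c)"
  shows "\<exists>A b c. dim_vec b = dim_row A \<and> dim_vec c = dim_col A \<and>
           (\<exists>\<pi>. \<pi> \<noteq> id \<and> formulation_symmetry A b c \<pi>) \<and>
           (\<exists>x. ilp_optimal A b c x) \<and>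
           \<not> ilp_optimal A b c (f (bip A b c))"
proof -
  define A :: "real mat" where "A = mat 2 2 (\<lambda>(i,j). if i = 0 then 1 else -1)"
  define b :: "real vec" where "b = vec 2 (\<lambda>i. if i = 0 then 1 else -1)"
  define c :: "real vec" where "c = 0\<^sub>v 2"
  define \<pi> :: "nat \<Rightarrow> nat" where "\<pi> = Transposition.transpose 0 1"
  have dA: "dim_row A = 2" "dim_col A = 2" by (auto simp: A_def)
  have db: "dim_vec b = dim_row A" "dim_vec c = dim_col A" by (auto simp: A_def b_def c_def)
  have pp: "\<pi> permutes {..<dim_col A}" unfolding \<pi>_def dA by (rule permutes_swap_id) auto
  have p0: "\<pi> 0 = 1" "\<pi> 1 = 0" by (auto simp: \<pi>_def)
  have pj: "\<And>j. j \<ge> 2 \<Longrightarrow> \<pi> j = j" by (auto simp: \<pi>_def Transposition.transpose_def)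
  have pl: "\<And>j. j < 2 \<Longrightarrow> \<pi> j < 2" using p0 by (auto simp: less_2_cases_iff)
  have cp: "col_perm \<pi> (bip A b c) = bip A b c"
  proof (rule eq_matI)
    fix i j assume i: "i < dim_row (bip A b c)" and j: "j < dim_col (bip A b c)"
    then have i3: "i < 3" and j3: "j < 3" by (auto simp: bip_def dA)
    show "col_perm \<pi> (bip A b c) $$ (i, j) = bip A b c $$ (i, j)"
    proof (cases "j < 2")
      case True
      then have "\<pi> j < 3" using pl by fastforce
      then show ?thesis using i j True pl[OF True]
        by (auto simp: col_perm_def bip_def dA A_def b_def c_def)
    next
      case False
      then show ?thesis using i j pj[of j] by (auto simp: col_perm_def)
    qed
  qed (auto simp: col_perm_def)
  have fe: "f (bip A b c) = vec_perm \<pi> (f (bip A b c))"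
    using col_equiv[OF db pp] cp by simp
  have fd: "dim_vec (f (bip A b c)) = 2" using dim[OF db] dA by simp
  have f01: "f (bip A b c) $ 0 = f (bip A b c) $ 1"
  proof -
    have "f (bip A b c) $ 0 = vec_perm \<pi> (f (bip A b c)) $ 0" using fe by simp
    also have "\<dots> = f (bip A b c) $ 1" using fd p0 by (simp add: vec_perm_def)
    finally show ?thesis .
  qed
  have mv: "\<And>x. dim_vec x = 2 \<Longrightarrow> (A *\<^sub>v x) $ 0 = x $ 0 + x $ 1 \<and> (A *\<^sub>v x) $ 1 = - x $ 0 - x $ 1"
    by (auto simp: A_def mult_mat_vec_def scalar_prod_def row_def numeral_2_eq_2 lessThan_Suc)
  have feasx: "\<And>x. ilp_feasible A b x \<Longrightarrow> x $ 0 + x $ 1 = 1"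
  proof -
    fix x assume "ilp_feasible A b x"
    then have "dim_vec x = 2" "(A *\<^sub>v x) $ 0 \<le> b $ 0" "(A *\<^sub>v x) $ 1 \<le> b $ 1"
      by (auto simp: ilp_feasible_def dA)
    then show "x $ 0 + x $ 1 = 1" using mv[of x] by (auto simp: b_def)
  qed
  have notopt: "\<not> ilp_optimal A b c (f (bip A b c))"
  proof
    assume "ilp_optimal A b c (f (bip A b c))"
    then have F: "ilp_feasible A b (f (bip A b c))" by (simp add: ilp_optimal_def)
    then have s: "f (bip A b c) $ 0 + f (bip A b c) $ 1 = 1" by (rule feasx)
    from F have "f (bip A b c) $ 0 \<in> \<int>" by (auto simp: ilp_feasible_def dA)
    then obtain k :: int where k: "f (bip A b c) $ 0 = of_int k" by (auto elim: Ints_cases)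
    with s f01 have "2 * (of_int k :: real) = 1" by simp
    then have "2 * k = 1" by (metis of_int_eq_iff of_int_mult of_int_numeral of_int_1)
    then show False by presburger
  qed
  define x0 :: "real vec" where "x0 = vec 2 (\<lambda>i. if i = 0 then 1 else 0)"
  have x0f: "ilp_feasible A b x0"
    using mv[of x0] by (auto simp: ilp_feasible_def dA x0_def b_def less_2_cases_iff)
  have opt: "ilp_optimal A b c x0"
    using x0f by (auto simp: ilp_optimal_def c_def ilp_feasible_def x0_def scalar_prod_def)
  have sym: "formulation_symmetry A b c \<pi>"
    unfolding formulation_symmetry_def
  proof (intro conjI pp exI[of _ id])
    show "id permutes {..<dim_row A}" by simp
    show "\<forall>j<dim_col A. c $ \<pi> j = c $ j" using pl dA by (auto simp: c_def)
    show "\<forall>i<dim_row A. b $ id i = b $ i" by simp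
    show "\<forall>i<dim_row A. \<forall>j<dim_col A. A $$ (id i, \<pi> j) = A $$ (i, j)"
      using pl dA by (auto simp: A_def)
  qed
  have "\<pi> \<noteq> id" using p0 by auto
  then show ?thesis using db sym opt notopt by blast
qed

end
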